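(* Let $0<c_1\le 0.2$ and suppose $t\le c_1 n$. Then for all sufficiently large $n$ and all $k\ge 0$, with $L=\sum_{i=1}^x (a_i-t_i)\, d_i\, e^{d_i k/n}$, we have $\frac{L}{n-d_{\max}}\ge 1$.
   Context: Setting: $n$ vertices, a target set $B$ with $|B|=t$, each vertex $v$ has out-degree $d_v$ with $2\le d_{\min}\le d_v\le d_{\max}$ (constants). $d_1,\dots,d_x$ are the distinct out-degrees, $a_i$ is the number of vertices of out-degree $d_i$ (so $\sum_i a_i=n$), and $t_i$ the number of vertices of $B$ of out-degree $d_i$ (so $\sum_i t_i = t$). *)

theory Defs
  imports Complex_Main
begin

text \<open>Vertices are 0..n-1, deg v is the out-degree of v, B is the target set.
  The distinct out-degrees d_i are the elements of deg ` {..<n};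
  a_i = number of vertices of degree d_i, t_i = number of vertices of B of degree d_i.
  Lsum n deg B k = sum over i of (a_i - t_i) * d_i * exp(d_i k / n).\<close>

definition deg_count :: "nat set \<Rightarrow> (nat \<Rightarrow> nat) \<Rightarrow> nat \<Rightarrow> nat" where
  "deg_count S deg d = card {v \<in> S. deg v = d}"

definition Lsum :: "nat \<Rightarrow> (nat \<Rightarrow> nat) \<Rightarrow> nat set \<Rightarrow> real \<Rightarrow> real" where
  "Lsum n deg B k =
     (\<Sum>d \<in> deg ` {..<n}.
        (real (deg_count {..<n} deg d) - real (deg_count B deg d)) * real d
          * exp (real d * k / real n))"

end

theory Submission
  imports Defs
begin

lemma count_sum:
  assumes "finite S" "finite T" "deg ` S \<subseteq> T"
  shows "(\<Sum>d\<in>T. real (deg_count S deg d)) = real (card S)"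
proof -
  have "(\<Sum>d\<in>T. (\<Sum>v\<in>{v\<in>S. deg v = d}. (1::real))) = (\<Sum>v\<in>S. 1)"
    using sum.group[OF assms, of "\<lambda>_. (1::real)"] by simp
  then show ?thesis unfolding deg_count_def by simp
qed

theorem lemma7:
  fixes c1 :: real and dmin dmax :: nat
  assumes "0 < c1" and "c1 \<le> 0.2" and "2 \<le> dmin" and "dmin \<le> dmax"
  shows "\<exists>N::nat. \<forall>n\<ge>N. \<forall>(deg :: nat \<Rightarrow> nat) (B :: nat set).
           B \<subseteq> {..<n} \<and> (\<forall>v<n. dmin \<le> deg v \<and> deg v \<le> dmax)
           \<and> real (card B) \<le> c1 * real n \<longrightarrow>
           (\<forall>k::real. k \<ge> 0 \<longrightarrow> Lsum n deg B k / (real n - real dmax) \<ge> 1)"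
proof (intro exI[of _ "dmax + 1"] allI impI)
  fix n deg B and k :: real
  assume n: "dmax + 1 \<le> n"
    and H: "B \<subseteq> {..<n} \<and> (\<forall>v<n. dmin \<le> deg v \<and> deg v \<le> dmax) \<and> real (card B) \<le> c1 * real n"
    and k: "0 \<le> k"
  have B: "B \<subseteq> {..<n}" and dg: "\<And>v. v < n \<Longrightarrow> dmin \<le> deg v" and cB: "real (card B) \<le> c1 * real n"
    using H by auto
  have fB: "finite B" using B finite_subset by blast
  let ?D = "deg ` {..<n}"
  have trm: "(real (deg_count {..<n} deg d) - real (deg_count B deg d)) * 2
      \<le> (real (deg_count {..<n} deg d) - real (deg_count B deg d)) * real d * exp (real d * k / real n)"
    if "d \<in> ?D" for d
  proof -
    have d2: "2 \<le> real d" using that dg assms(3) by force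
    have "deg_count B deg d \<le> deg_count {..<n} deg d"
      unfolding deg_count_def using B by (intro card_mono) auto
    hence a: "0 \<le> real (deg_count {..<n} deg d) - real (deg_count B deg d)" by simp
    have e: "1 \<le> exp (real d * k / real n)" using k by simp
    have "2 \<le> real d * exp (real d * k / real n)"
      using mult_mono[OF d2 e] by simp
    from mult_left_mono[OF this a] show ?thesis by (simp add: mult.assoc)
  qed
  have "(\<Sum>d\<in>?D. (real (deg_count {..<n} deg d) - real (deg_count B deg d)) * 2) \<le> Lsum n deg B k"
    unfolding Lsum_def by (rule sum_mono[OF trm])
  moreover have "(\<Sum>d\<in>?D. (real (deg_count {..<n} deg d) - real (deg_count B deg d)) * 2)
      = 2 * (real n - real (card B))"
  proof -
    have "deg ` B \<subseteq> ?D" using B by auto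
    then have "(\<Sum>d\<in>?D. real (deg_count B deg d)) = real (card B)"
      using count_sum[OF fB] by auto
    moreover have "(\<Sum>d\<in>?D. real (deg_count {..<n} deg d)) = real n"
      using count_sum[of "{..<n}" ?D deg] by simp
    ultimately show ?thesis
      by (simp add: sum_distrib_right[symmetric] sum_subtractf)
  qed
  ultimately have L: "2 * (real n - real (card B)) \<le> Lsum n deg B k" by simp
  have pos: "0 < real n - real dmax" using n by simp
  have "real n - real dmax \<le> 2 * (real n - real (card B))"
  proof -
    have "c1 * real n \<le> 0.2 * real n" using assms(2) by (intro mult_right_mono) auto
    then show ?thesis using cB by simp
  qed
  with L pos show "1 \<le> Lsum n deg B k / (real n - real dmax)" by simp
qed

end
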